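(* Let $G$ be a graph, $k$ a positive integer, and $V_1,\dots,V_t$ a partition of $V(G)$ into types as described in the context. If the integer program $\mathrm{ILP}(G,k,V_1,\dots,V_t)$ described in the context has a feasible assignment, then $G$ has a star coloring using at most $k$ colors.
   Context: All graphs are finite, simple, undirected and connected. A star coloring of $G$ with at most $k$ colors is a map $f:V(G)\to\{1,\dots,k\}$ with $f(u)\neq f(v)$ for every edge $uv$ such that every path on four vertices (not necessarily induced) receives at least three distinct colors. Two vertices $u,v$ have the same type if $N(u)\setminus\{v\}=N(v)\setminus\{u\}$; $V_1,\dots,V_t$ is a partition of $V(G)$ into nonempty sets in each of which all vertices pairwise have the same type. Then each $G[V_i]$ is a clique or an independent set; $V_i$ is called a clique type if $G[V_i]$ is complete and an independent type if $G[V_i]$ has no edges. For $i\neq j$, either every vertex of $V_i$ is adjacent to every vertex of $V_j$ (write $V_j\in adj(V_i)$) or there are no edges between them. For $A\subseteq[t]$ let $T_A=\{V_i: i\in A\}$. The program $\mathrm{ILP}(G,k,V_1,\dots,V_t)$ has one integer variable $n_A$ for every $A\subseteq[t]$ and the following constraints: (C0) $n_A=0$ (the variable is discarded) whenever $T_A$ contains two types $V_i,V_j$ with $V_j\in adj(V_i)$; (C1) $\sum_{A\subseteq[t]} n_A\le k$; (C2) for each clique type $V_i$: $\sum_{A: V_i\in T_A} n_A=|V_i|$; (C3) for each independent type $V_i$: $1\le \sum_{A:V_i\in T_A} n_A\le \min\{k,|V_i|\}$; (C4) for every four distinct types $V_{i_1},V_{i_2},V_{i_3},V_{i_4}$ with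 $V_{i_1},V_{i_3}\in adj(V_{i_2})$ and $V_{i_4}\in adj(V_{i_3})$: if $\sum_{A: V_{i_1},V_{i_3}\in T_A} n_A\ge 1$ then $\sum_{B: V_{i_2},V_{i_4}\in T_B} n_B=0$; (C5) for every three distinct types $V_{i_1},V_{i_2},V_{i_3}$ with $V_{i_1}$ an independent type and $V_{i_2},V_{i_3}\in adj(V_{i_1})$: if $\sum_{A:V_{i_1}\in T_A} n_A<|V_{i_1}|$ then $\sum_{B: V_{i_2},V_{i_3}\in T_B} n_B=0$; (C6) for every two distinct independent types $V_{i_1},V_{i_2}$ with $V_{i_1}\in adj(V_{i_2})$: if $\sum_{A:V_{i_1}\in T_A} n_A<|V_{i_1}|$ then $\sum_{B:V_{i_2}\in T_B} n_B=|V_{i_2}|$, and symmetrically with $i_1,i_2$ swapped; (C7) $n_A\ge 0$ for all $A\subseteq[t]$. A feasible assignment is an assignment of integer values to all $n_A$ satisfying (C0)–(C7). *)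

theory Defs
  imports Main
begin

definition is_graph :: "'a set \<Rightarrow> ('a \<Rightarrow> 'a \<Rightarrow> bool) \<Rightarrow> bool" where
  "is_graph V E \<longleftrightarrow> finite V \<and> V \<noteq> {} \<and>
     (\<forall>u v. E u v \<longrightarrow> u \<in> V \<and> v \<in> V) \<and>
     (\<forall>u v. E u v \<longrightarrow> E v u) \<and> (\<forall>u. \<not> E u u) \<and>
     (\<forall>u\<in>V. \<forall>v\<in>V. E\<^sup>*\<^sup>* u v)"

definition nbhd :: "('a \<Rightarrow> 'a \<Rightarrow> bool) \<Rightarrow> 'a \<Rightarrow> 'a set" where
  "nbhd E u = {w. E u w}"

definition same_type :: "('a \<Rightarrow> 'a \<Rightarrow> bool) \<Rightarrow> 'a \<Rightarrow> 'a \<Rightarrow> bool" where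
  "same_type E u v \<longleftrightarrow> nbhd E u - {v} = nbhd E v - {u}"

definition type_partition ::
  "'a set \<Rightarrow> ('a \<Rightarrow> 'a \<Rightarrow> bool) \<Rightarrow> nat \<Rightarrow> (nat \<Rightarrow> 'a set) \<Rightarrow> bool" where
  "type_partition V E t P \<longleftrightarrow>
     (\<forall>i\<in>{1..t}. P i \<noteq> {} \<and> P i \<subseteq> V) \<and>
     (\<forall>i\<in>{1..t}. \<forall>j\<in>{1..t}. i \<noteq> j \<longrightarrow> P i \<inter> P j = {}) \<and>
     (\<Union>i\<in>{1..t}. P i) = V \<and>
     (\<forall>i\<in>{1..t}. \<forall>u\<in>P i. \<forall>v\<in>P i. same_type E u v)"

definition clique_type :: "('a \<Rightarrow> 'a \<Rightarrow> bool) \<Rightarrow> (nat \<Rightarrow> 'a set) \<Rightarrow> nat \<Rightarrow> bool" where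
  "clique_type E P i \<longleftrightarrow> (\<forall>u\<in>P i. \<forall>v\<in>P i. u \<noteq> v \<longrightarrow> E u v)"

definition indep_type :: "('a \<Rightarrow> 'a \<Rightarrow> bool) \<Rightarrow> (nat \<Rightarrow> 'a set) \<Rightarrow> nat \<Rightarrow> bool" where
  "indep_type E P i \<longleftrightarrow> (\<forall>u\<in>P i. \<forall>v\<in>P i. \<not> E u v)"

definition adjT :: "('a \<Rightarrow> 'a \<Rightarrow> bool) \<Rightarrow> (nat \<Rightarrow> 'a set) \<Rightarrow> nat \<Rightarrow> nat \<Rightarrow> bool" where
  "adjT E P i j \<longleftrightarrow> i \<noteq> j \<and> (\<forall>u\<in>P i. \<forall>v\<in>P j. E u v)"

definition sumC :: "nat \<Rightarrow> (nat set \<Rightarrow> int) \<Rightarrow> nat set \<Rightarrow> int" where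
  "sumC t n S = (\<Sum>A\<in>{A. A \<subseteq> {1..t} \<and> S \<subseteq> A}. n A)"

definition ILP_feasible ::
  "'a set \<Rightarrow> ('a \<Rightarrow> 'a \<Rightarrow> bool) \<Rightarrow> nat \<Rightarrow> nat \<Rightarrow> (nat \<Rightarrow> 'a set) \<Rightarrow> (nat set \<Rightarrow> int) \<Rightarrow> bool" where
  "ILP_feasible V E k t P n \<longleftrightarrow>
    \<comment> \<open>C0\<close>
    (\<forall>A. A \<subseteq> {1..t} \<longrightarrow> (\<exists>i\<in>A. \<exists>j\<in>A. adjT E P i j) \<longrightarrow> n A = 0) \<and>
    \<comment> \<open>C1\<close>
    (\<Sum>A\<in>Pow {1..t}. n A) \<le> int k \<and>
    \<comment> \<open>C2\<close>
    (\<forall>i\<in>{1..t}. clique_type E P i \<longrightarrow> sumC t n {i} = int (card (P i))) \<and>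
    \<comment> \<open>C3\<close>
    (\<forall>i\<in>{1..t}. indep_type E P i \<longrightarrow>
        1 \<le> sumC t n {i} \<and> sumC t n {i} \<le> int (min k (card (P i)))) \<and>
    \<comment> \<open>C4\<close>
    (\<forall>i1\<in>{1..t}. \<forall>i2\<in>{1..t}. \<forall>i3\<in>{1..t}. \<forall>i4\<in>{1..t}.
        distinct [i1, i2, i3, i4] \<longrightarrow>
        adjT E P i2 i1 \<longrightarrow> adjT E P i2 i3 \<longrightarrow> adjT E P i3 i4 \<longrightarrow>
        sumC t n {i1, i3} \<ge> 1 \<longrightarrow> sumC t n {i2, i4} = 0) \<and>
    \<comment> \<open>C5\<close>
    (\<forall>i1\<in>{1..t}. \<forall>i2\<in>{1..t}. \<forall>i3\<in>{1..t}.
        distinct [i1, i2, i3] \<longrightarrow> indep_type E P i1 \<longrightarrow>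
        adjT E P i1 i2 \<longrightarrow> adjT E P i1 i3 \<longrightarrow>
        sumC t n {i1} < int (card (P i1)) \<longrightarrow> sumC t n {i2, i3} = 0) \<and>
    \<comment> \<open>C6 (the symmetric case is covered by quantifying over both orders)\<close>
    (\<forall>i1\<in>{1..t}. \<forall>i2\<in>{1..t}.
        i1 \<noteq> i2 \<longrightarrow> indep_type E P i1 \<longrightarrow> indep_type E P i2 \<longrightarrow>
        adjT E P i2 i1 \<longrightarrow>
        sumC t n {i1} < int (card (P i1)) \<longrightarrow> sumC t n {i2} = int (card (P i2))) \<and>
    \<comment> \<open>C7\<close>
    (\<forall>A. A \<subseteq> {1..t} \<longrightarrow> n A \<ge> 0)"

definition star_coloring ::
  "'a set \<Rightarrow> ('a \<Rightarrow> 'a \<Rightarrow> bool) \<Rightarrow> nat \<Rightarrow> ('a \<Rightarrow> nat) \<Rightarrow> bool" where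
  "star_coloring V E k f \<longleftrightarrow>
     (\<forall>v\<in>V. f v \<in> {1..k}) \<and>
     (\<forall>u v. E u v \<longrightarrow> f u \<noteq> f v) \<and>
     (\<forall>a b c d. distinct [a, b, c, d] \<longrightarrow> E a b \<longrightarrow> E b c \<longrightarrow> E c d \<longrightarrow>
        card {f a, f b, f c, f d} \<ge> 3)"

end

theory Submission
  imports Defs
begin

lemma surj_card:
  assumes "finite X" "finite Y" "Y \<noteq> {}" "card Y \<le> card X"
  shows "\<exists>g. g ` X = Y \<and> (card Y = card X \<longrightarrow> inj_on g X)"
proof -
  obtain X' where X': "X' \<subseteq> X" "card X' = card Y" "finite X'"
    using obtain_subset_with_card_n[OF assms(4)] by blast
  obtain h where h: "bij_betw h X' Y" using finite_same_card_bij[OF X'(3) assms(2) X'(2)] by blast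
  obtain y0 where y0: "y0 \<in> Y" using assms(3) by blast
  define g where "g x = (if x \<in> X' then h x else y0)" for x
  have "g ` X = Y"
  proof
    show "g ` X \<subseteq> Y" using h y0 by (auto simp: g_def bij_betw_def)
    show "Y \<subseteq> g ` X"
    proof
      fix y assume "y \<in> Y"
      then obtain x where "x \<in> X'" "h x = y" using h by (auto simp: bij_betw_def)
      then show "y \<in> g ` X" using X'(1) by (force simp: g_def)
    qed
  qed
  moreover have "card Y = card X \<longrightarrow> inj_on g X"
  proof
    assume "card Y = card X"
    then have "X' = X" using X' assms(1) by (metis card_subset_eq)
    then show "inj_on g X" using h by (auto simp: g_def bij_betw_def inj_on_def)
  qed
  ultimately show ?thesis by blast
qed

lemma st_edge:
  assumes "same_type E u v" "E u w" "w \<noteq> v" "\<not> E u u"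
  shows "E v w"
proof -
  have "w \<in> nbhd E u - {v}" using assms by (simp add: nbhd_def)
  then have "w \<in> nbhd E v - {u}" using assms(1) unfolding same_type_def by blast
  then show ?thesis by (simp add: nbhd_def)
qed

lemma same_type_refl: "same_type E u u" by (simp add: same_type_def)


theorem lemma1:
  fixes V :: "'a set" and E :: "'a \<Rightarrow> 'a \<Rightarrow> bool" and k t :: nat
    and P :: "nat \<Rightarrow> 'a set"
  assumes "is_graph V E"
    and "k \<ge> 1"
    and "type_partition V E t P"
    and "\<exists>n. ILP_feasible V E k t P n"
  shows "\<exists>f. star_coloring V E k f"
proof -
  obtain n where F: "ILP_feasible V E k t P n" using assms(4) by blast
  have G: "finite V" "\<And>u v. E u v \<Longrightarrow> u \<in> V \<and> v \<in> V" "\<And>u v. E u v \<Longrightarrow> E v u"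
    "\<And>u. \<not> E u u" using assms(1) unfolding is_graph_def by blast+
  have TP1: "\<And>i. i \<in> {1..t} \<Longrightarrow> P i \<noteq> {} \<and> P i \<subseteq> V"
    and TP2: "\<And>i j. i \<in> {1..t} \<Longrightarrow> j \<in> {1..t} \<Longrightarrow> i \<noteq> j \<Longrightarrow> P i \<inter> P j = {}"
    and TP3: "(\<Union>i\<in>{1..t}. P i) = V"
    and TP4: "\<And>i u v. i \<in> {1..t} \<Longrightarrow> u \<in> P i \<Longrightarrow> v \<in> P i \<Longrightarrow> same_type E u v"
    using assms(3) unfolding type_partition_def by blast+
  note Fs = F[unfolded ILP_feasible_def]
  have C0: "\<And>A. A \<subseteq> {1..t} \<Longrightarrow> (\<exists>i\<in>A. \<exists>j\<in>A. adjT E P i j) \<Longrightarrow> n A = 0"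
    using conjunct1[OF Fs] by blast
  have C1: "(\<Sum>A\<in>Pow {1..t}. n A) \<le> int k"
    using conjunct1[OF conjunct2[OF Fs]] by blast
  have C2: "\<And>i. i\<in>{1..t} \<Longrightarrow> clique_type E P i \<Longrightarrow> sumC t n {i} = int (card (P i))"
    using conjunct1[OF conjunct2[OF conjunct2[OF Fs]]] by blast
  have C3: "\<And>i. i\<in>{1..t} \<Longrightarrow> indep_type E P i \<Longrightarrow>
        1 \<le> sumC t n {i} \<and> sumC t n {i} \<le> int (min k (card (P i)))"
    using conjunct1[OF conjunct2[OF conjunct2[OF conjunct2[OF Fs]]]] by blast
  have C4: "\<And>i1 i2 i3 i4. i1\<in>{1..t} \<Longrightarrow> i2\<in>{1..t} \<Longrightarrow> i3\<in>{1..t} \<Longrightarrow> i4\<in>{1..t} \<Longrightarrow>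
        distinct [i1, i2, i3, i4] \<Longrightarrow>
        adjT E P i2 i1 \<Longrightarrow> adjT E P i2 i3 \<Longrightarrow> adjT E P i3 i4 \<Longrightarrow>
        sumC t n {i1, i3} \<ge> 1 \<Longrightarrow> sumC t n {i2, i4} = 0"
    using conjunct1[OF conjunct2[OF conjunct2[OF conjunct2[OF conjunct2[OF Fs]]]]] by blast
  have C5: "\<And>i1 i2 i3. i1\<in>{1..t} \<Longrightarrow> i2\<in>{1..t} \<Longrightarrow> i3\<in>{1..t} \<Longrightarrow>
        distinct [i1, i2, i3] \<Longrightarrow> indep_type E P i1 \<Longrightarrow>
        adjT E P i1 i2 \<Longrightarrow> adjT E P i1 i3 \<Longrightarrow>
        sumC t n {i1} < int (card (P i1)) \<Longrightarrow> sumC t n {i2, i3} = 0"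
    using conjunct1[OF conjunct2[OF conjunct2[OF conjunct2[OF conjunct2[OF conjunct2[OF Fs]]]]]] by blast
  have C6: "\<And>i1 i2. i1\<in>{1..t} \<Longrightarrow> i2\<in>{1..t} \<Longrightarrow>
        i1 \<noteq> i2 \<Longrightarrow> indep_type E P i1 \<Longrightarrow> indep_type E P i2 \<Longrightarrow>
        adjT E P i2 i1 \<Longrightarrow>
        sumC t n {i1} < int (card (P i1)) \<Longrightarrow> sumC t n {i2} = int (card (P i2))"
    using conjunct1[OF conjunct2[OF conjunct2[OF conjunct2[OF conjunct2[OF conjunct2[OF conjunct2[OF Fs]]]]]]] by blast
  have C7: "\<And>A. A \<subseteq> {1..t} \<Longrightarrow> n A \<ge> 0"
    using conjunct2[OF conjunct2[OF conjunct2[OF conjunct2[OF conjunct2[OF conjunct2[OF conjunct2[OF Fs]]]]]]] by blast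

  define tp where "tp v = (THE i. i \<in> {1..t} \<and> v \<in> P i)" for v
  have tuniq: "tp v = i" if "i \<in> {1..t}" "v \<in> P i" for v i
  proof -
    have "\<And>j. j \<in> {1..t} \<and> v \<in> P j \<Longrightarrow> j = i" using TP2 that by blast
    then show ?thesis unfolding tp_def using that by (metis (no_types, lifting) the_equality)
  qed
  have tin: "tp v \<in> {1..t} \<and> v \<in> P (tp v)" if vV: "v \<in> V" for v
  proof -
    obtain i where "i \<in> {1..t}" "v \<in> P i" using vV TP3 by blast
    then show ?thesis using tuniq by metis
  qed
  have tst: "same_type E u v" if "u \<in> V" "v \<in> V" "tp u = tp v" for u v
    using tin[OF that(1)] tin[OF that(2)] that(3) TP4 by metis
  have adj: "adjT E P (tp u) (tp v)" if "E u v" "tp u \<noteq> tp v" for u v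
    unfolding adjT_def
  proof (intro conjI ballI)
    show "tp u \<noteq> tp v" by fact
    fix u' v' assume u': "u' \<in> P (tp u)" and v': "v' \<in> P (tp v)"
    have uV: "u \<in> V" and vV: "v \<in> V" using G(2) that by auto
    have "v \<notin> P (tp u)" using tuniq tin[OF uV] that(2) by metis
    then have "v \<noteq> u'" using u' by blast
    have "same_type E u u'" using TP4 tin[OF uV] u' by blast
    then have "E u' v" using st_edge that(1) \<open>v \<noteq> u'\<close> G(4) by metis
    then have "E v u'" using G(3) by blast
    have "u' \<notin> P (tp v)" using u' TP2 tin[OF uV] tin[OF vV] that(2) by blast
    then have "u' \<noteq> v'" using v' by blast
    have "same_type E v v'" using TP4 tin[OF vV] v' by blast
    then have "E v' u'" using st_edge \<open>E v u'\<close> \<open>u' \<noteq> v'\<close> G(4) by metis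
    then show "E u' v'" using G(3) by blast
  qed
  have ci: "clique_type E P i \<or> indep_type E P i" if i: "i \<in> {1..t}" for i
  proof (cases "indep_type E P i")
    case False
    then obtain x y where xy: "x \<in> P i" "y \<in> P i" "E x y" unfolding indep_type_def by blast
    have zx: "E z x" if "z \<in> P i" "z \<noteq> x" for z
      using st_edge[OF TP4[OF i xy(2) that(1)] G(3)[OF xy(3)] that(2)[symmetric]] G(4)
      by (metis that(2))
    have "E u v" if "u \<in> P i" "v \<in> P i" "u \<noteq> v" for u v
    proof (cases "u = x")
      case True then show ?thesis using zx that G(3) by metis
    next
      case False
      then have "E u x" using zx that by blast
      then have "E x u" using G(3) by blast
      then have "E v u" using st_edge[OF TP4[OF i xy(1) that(2)]] G(4) that(3) by metis
      then show ?thesis using G(3) by blast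
    qed
    then show ?thesis unfolding clique_type_def by blast
  qed auto
  define D where "D = Sigma (Pow {1..t}) (\<lambda>A. {0..<nat (n A)})"
  define S where "S i = Sigma {A. A \<subseteq> {1..t} \<and> {i} \<subseteq> A} (\<lambda>A. {0..<nat (n A)})" for i
  have finD: "finite D" unfolding D_def by auto
  have SD: "S i \<subseteq> D" for i unfolding S_def D_def by auto
  have finS: "finite (S i)" for i using SD finD finite_subset by metis
  have cardS: "int (card (S i)) = sumC t n {i}" for i
  proof -
    have fin: "finite {A. A \<subseteq> {1..t} \<and> {i} \<subseteq> A}" by (rule finite_subset[of _ "Pow {1..t}"]) auto
    have "int (card (S i)) = (\<Sum>A\<in>{A. A \<subseteq> {1..t} \<and> {i} \<subseteq> A}. int (nat (n A)))"
      unfolding S_def using fin by simp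
    also have "\<dots> = sumC t n {i}" unfolding sumC_def
      by (rule sum.cong) (use C7 in auto)
    finally show ?thesis .
  qed
  have cardD: "card D \<le> k"
  proof -
    have "int (card D) = (\<Sum>A\<in>Pow {1..t}. int (nat (n A)))"
      unfolding D_def by simp
    also have "\<dots> = (\<Sum>A\<in>Pow {1..t}. n A)"
      by (rule sum.cong) (use C7 in auto)
    finally show ?thesis using C1 by linarith
  qed
  have sbound: "1 \<le> sumC t n {i} \<and> sumC t n {i} \<le> int (card (P i))" if i: "i \<in> {1..t}" for i
  proof -
    have "card (P i) \<ge> 1" using TP1[OF i] G(1) by (metis One_nat_def Suc_leI card_gt_0_iff finite_subset)
    then show ?thesis using ci[OF i] C2[OF i] C3[OF i] by fastforce
  qed
  have "\<forall>i\<in>{1..t}. \<exists>g. g ` P i = S i \<and> (card (S i) = card (P i) \<longrightarrow> inj_on g (P i))"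
  proof
    fix i assume i: "i \<in> {1..t}"
    have "finite (P i)" using TP1[OF i] G(1) finite_subset by metis
    moreover have "S i \<noteq> {}" using sbound[OF i] cardS[of i] by fastforce
    moreover have "card (S i) \<le> card (P i)" using sbound[OF i] cardS[of i] by linarith
    ultimately show "\<exists>g. g ` P i = S i \<and> (card (S i) = card (P i) \<longrightarrow> inj_on g (P i))"
      using surj_card finS by blast
  qed
  then obtain Gf where Gf: "\<And>i. i\<in>{1..t} \<Longrightarrow> Gf i ` P i = S i \<and> (card (S i) = card (P i) \<longrightarrow> inj_on (Gf i) (P i))"
    by metis
  define col where "col v = Gf (tp v) v" for v
  have colS: "col v \<in> S (tp v)" if "v \<in> V" for v
    using Gf[of "tp v"] tin[OF that] unfolding col_def by blast
  obtain enc where enc: "bij_betw enc D {0..<card D}" using ex_bij_betw_finite_nat[OF finD] by blast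
  define f where "f v = Suc (enc (col v))" for v
  have feq: "col u = col v" if "u \<in> V" "v \<in> V" "f u = f v" for u v
  proof -
    have "col u \<in> D" "col v \<in> D" using colS that SD by blast+
    then show ?thesis using that(3) enc unfolding f_def bij_betw_def inj_on_def by auto
  qed
  have K1: "\<exists>A. A \<subseteq> {1..t} \<and> tp u \<in> A \<and> tp v \<in> A \<and> n A \<ge> 1"
    if hh: "u \<in> V" "v \<in> V" "col u = col v" for u v
  proof -
    obtain A m where "col u = (A, m)" by fastforce
    then have "A \<subseteq> {1..t} \<and> tp u \<in> A \<and> m < nat (n A)" "tp v \<in> A"
      using colS[OF hh(1)] colS[OF hh(2)] hh(3) unfolding S_def by auto
    then show ?thesis by (intro exI[of _ A]) auto
  qed
  have K1a: "sumC t n {tp u, tp v} \<ge> 1" if hh: "u \<in> V" "v \<in> V" "col u = col v" for u v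
  proof -
    obtain A where A: "A \<subseteq> {1..t}" "tp u \<in> A" "tp v \<in> A" "n A \<ge> 1" using K1[OF hh] by blast
    have fin: "finite {B. B \<subseteq> {1..t} \<and> {tp u, tp v} \<subseteq> B}" by (rule finite_subset[of _ "Pow {1..t}"]) auto
    have "n A \<le> sumC t n {tp u, tp v}" unfolding sumC_def
      by (rule member_le_sum) (use A C7 fin in auto)
    then show ?thesis using A by linarith
  qed
  have K1b: "\<not> adjT E P (tp u) (tp v)" if hh: "u \<in> V" "v \<in> V" "col u = col v" for u v
  proof
    assume ad: "adjT E P (tp u) (tp v)"
    obtain A where A: "A \<subseteq> {1..t}" "tp u \<in> A" "tp v \<in> A" "n A \<ge> 1" using K1[OF hh] by blast
    have "n A = 0" using C0[OF A(1)] A ad by blast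
    then show False using A by simp
  qed
  have K2: "sumC t n {tp u} < int (card (P (tp u)))"
    if "u \<in> V" "v \<in> V" "u \<noteq> v" "tp u = tp v" "col u = col v" for u v
  proof -
    have i: "tp u \<in> {1..t}" using tin[OF that(1)] by blast
    have "\<not> inj_on (Gf (tp u)) (P (tp u))"
      using that tin[OF that(1)] tin[OF that(2)] unfolding col_def inj_on_def by metis
    then have "card (S (tp u)) \<noteq> card (P (tp u))" using Gf[OF i] by blast
    then show ?thesis using sbound[OF i] cardS[of "tp u"] by linarith
  qed
  have proper: "f u \<noteq> f v" if "E u v" for u v
  proof
    assume fe: "f u = f v"
    have uv: "u \<in> V" "v \<in> V" using G(2) that by auto
    have ce: "col u = col v" using feq[OF uv fe] .
    show False
    proof (cases "tp u = tp v")
      case True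
      have i: "tp u \<in> {1..t}" using tin[OF uv(1)] by blast
      have "u \<noteq> v" using that G(4) by metis
      have "\<not> indep_type E P (tp u)" using that tin[OF uv(1)] tin[OF uv(2)] True
        unfolding indep_type_def by metis
      then have "clique_type E P (tp u)" using ci[OF i] by blast
      then show False using C2[OF i] K2[OF uv \<open>u \<noteq> v\<close> True ce] by simp
    next
      case False
      then show False using K1b[OF uv ce] adj[OF that] by blast
    qed
  qed
  have "star_coloring V E k f"
    unfolding star_coloring_def
  proof (intro conjI allI impI ballI)
    fix v assume "v \<in> V"
    have "col v \<in> D" using colS[OF \<open>v \<in> V\<close>] SD by blast
    then have "enc (col v) < card D" using enc unfolding bij_betw_def by auto
    then show "f v \<in> {1..k}" unfolding f_def using cardD by auto
  next
    fix u v assume "E u v" then show "f u \<noteq> f v" by (rule proper)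
  next
    fix a b c d
    assume dis: "distinct [a, b, c, d]" and ab: "E a b" and bc: "E b c" and cd: "E c d"
    have V: "a \<in> V" "b \<in> V" "c \<in> V" "d \<in> V" using G(2) ab bc cd by auto
    show "card {f a, f b, f c, f d} \<ge> 3"
    proof (rule ccontr)
      assume nc: "\<not> card {f a, f b, f c, f d} \<ge> 3"
      have p1: "f a \<noteq> f b" "f b \<noteq> f c" "f c \<noteq> f d" using proper ab bc cd by auto
      have fac: "f a = f c"
      proof (rule ccontr)
        assume "f a \<noteq> f c"
        then have "card {f a, f b, f c} = 3" using p1 by simp
        moreover have "card {f a, f b, f c} \<le> card {f a, f b, f c, f d}" by (rule card_mono) auto
        ultimately show False using nc by simp
      qed
      have fbd: "f b = f d"
      proof (rule ccontr)
        assume "f b \<noteq> f d"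
        then have "card {f b, f c, f d} = 3" using p1 by simp
        moreover have "card {f b, f c, f d} \<le> card {f a, f b, f c, f d}" by (rule card_mono) auto
        ultimately show False using nc by simp
      qed
      have nac: "\<not> E a c" using proper fac by blast
      have nbd: "\<not> E b d" using proper fbd by blast
      have cac: "col a = col c" using feq V fac by blast
      have cbd: "col b = col d" using feq V fbd by blast
      have tab: "tp a \<noteq> tp b"
      proof
        assume "tp a = tp b"
        then have "same_type E b a" using tst V by metis
        then have "E a c" using st_edge bc G(4) dis by (metis distinct_length_2_or_more)
        then show False using nac by blast
      qed
      have tbc: "tp b \<noteq> tp c"
      proof
        assume "tp b = tp c"
        then have "same_type E b c" using tst V by metis
        then have "E c a" using st_edge G(3)[OF ab] G(4) dis by (metis distinct.simps(2) list.set_intros(1) list.set_intros(2))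
        then show False using nac G(3) by blast
      qed
      have tcd: "tp c \<noteq> tp d"
      proof
        assume "tp c = tp d"
        then have "same_type E c d" using tst V by metis
        then have "E d b" using st_edge G(3)[OF bc] G(4) dis by (metis distinct.simps(2) list.set_intros(1) list.set_intros(2))
        then show False using nbd G(3) by blast
      qed
      have tad: "tp a \<noteq> tp d"
      proof
        assume "tp a = tp d"
        then have "same_type E d a" using tst V by metis
        then have "E a c" using st_edge G(3)[OF cd] G(4) dis by (metis distinct.simps(2) list.set_intros(1) list.set_intros(2))
        then show False using nac by blast
      qed
      have ad: "adjT E P (tp a) (tp b)" "adjT E P (tp b) (tp a)"
        "adjT E P (tp b) (tp c)" "adjT E P (tp c) (tp b)"
        "adjT E P (tp c) (tp d)" "adjT E P (tp d) (tp c)"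
        using adj ab bc cd G(3) tab tbc tcd by (metis)+
      have T: "tp a \<in> {1..t}" "tp b \<in> {1..t}" "tp c \<in> {1..t}" "tp d \<in> {1..t}"
        using tin V by blast+
      have indep_of: "indep_type E P (tp x)" if "x \<in> V" "y \<in> V" "x \<noteq> y" "tp x = tp y" "\<not> E x y" for x y
      proof -
        have "\<not> clique_type E P (tp x)" using that tin unfolding clique_type_def by metis
        then show ?thesis using ci tin[OF that(1)] by blast
      qed
      show False
      proof (cases "tp a = tp c")
        case ac: True
        have ia: "indep_type E P (tp a)" using indep_of[OF V(1) V(3) _ ac nac] dis by auto
        have la: "sumC t n {tp a} < int (card (P (tp a)))" using K2[OF V(1) V(3) _ ac cac] dis by auto
        show False
        proof (cases "tp b = tp d")
          case bd: True
          have ib: "indep_type E P (tp b)" using indep_of[OF V(2) V(4) _ bd nbd] dis by auto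
          have lb: "sumC t n {tp b} < int (card (P (tp b)))" using K2[OF V(2) V(4) _ bd cbd] dis by auto
          show False using C6[OF T(1) T(2) tab ia ib ad(2) la] lb by simp
        next
          case bd: False
          have "sumC t n {tp b, tp d} = 0"
            using C5[OF T(1) T(2) T(4) _ ia ad(1) _ la] tab bd tad ad(5) ac by simp
          then show False using K1a[OF V(2) V(4) cbd] by simp
        qed
      next
        case ac: False
        show False
        proof (cases "tp b = tp d")
          case bd: True
          have ib: "indep_type E P (tp b)" using indep_of[OF V(2) V(4) _ bd nbd] dis by auto
          have lb: "sumC t n {tp b} < int (card (P (tp b)))" using K2[OF V(2) V(4) _ bd cbd] dis by auto
          have "sumC t n {tp a, tp c} = 0"
            using C5[OF T(2) T(1) T(3) _ ib ad(2) ad(3) lb] tab tbc ac by auto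
          then show False using K1a[OF V(1) V(3) cac] by simp
        next
          case bd: False
          have "sumC t n {tp b, tp d} = 0"
            using C4[OF T ] tab tbc tcd tad ac bd ad(2) ad(3) ad(5) K1a[OF V(1) V(3) cac] by simp
          then show False using K1a[OF V(2) V(4) cbd] by simp
        qed
      qed
    qed
  qed
  then show ?thesis by blast
qed

end
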